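(* Let $G = (V, E, b, c)$ be a weighted hypergraph with $n$ vertices in which every vertex belongs to some edge, and let $\mathtt{OPT}$ be a minimum-cost edge cover of $G$. For any $0 \leq \epsilon < 1$, algorithm SSSC outputs a $(1-\epsilon)$-cover certificate for $G$ whose image has cost $O\left( \min\{ 1/\epsilon, \sqrt{n} \} \cdot c(\mathtt{OPT}) \right)$.
   Context: A weighted hypergraph $G = (V, E, b, c)$ has vertex set $V$ ($|V| = n$), a multiset $E$ of non-empty edges $e \subseteq V$, benefits $b : V \to \mathbb{Q}_{>0}$ and costs $c : E \to \mathbb{Q}_{>0}$; $b(U) = \sum_{v \in U} b(v)$, $c(F) = \sum_{e \in F} c(e)$. An edge cover is a set $F \subseteq E$ whose union is $V$. A $\delta$-cover certificate for $G$ is a partial function $\chi$ from $V$ to edge identifiers such that (1) if $v \in \mathrm{Dom}(\chi)$ and $\chi(v) = \mathrm{id}(e)$ then $v \in e$, and (2) $b(\mathrm{Dom}(\chi)) \geq \delta \cdot b(V)$; $\mathrm{Im}(\chi)$ is the set of edges whose identifiers are values of $\chi$. Convention: $\min\{1/x, y\} = y$ when $x = 0$. Edges arrive in a stream $e_0, e_1, \dots$ with unique identifiers $\mathrm{id}(e)$. Procedure COVER (on a weighted hypergraph with benefit function $\beta$) maintains for each $v$ a variable $\mathrm{eid}(v)$ (initially NULL) and an integer $\mathrm{eff}(v)$ (initially $-\infty$); $\mathrm{eff}_t(v)$ is its value just before $e_t$ is processed. For $T \subseteq e_t$, $\mathrm{lev}_t(T) = \lceil \lg(\beta(T)/c(e_t))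 \rceil$ ($\lg$ = base-2 logarithm), and $T$ is effective at time $t$ if $\mathrm{lev}_t(T) > \mathrm{eff}_t(v)$ for all $v \in T$. When $e_t$ arrives, COVER picks an effective $T \subseteq e_t$ of largest $\beta(T)$ and for every $v \in T$ sets $\mathrm{eid}(v) \leftarrow \mathrm{id}(e_t)$, $\mathrm{eff}(v) \leftarrow \mathrm{lev}_t(T)$. Algorithm SSSC runs in parallel over the stream: (P1) COVER with benefits $b$, with final values $\mathrm{eid}_\infty(\cdot), \mathrm{eff}_\infty(\cdot)$; (P2) COVER with all benefits equal to $1$, with final values $\mathrm{eid}^{\mathbf{1}}_\infty(\cdot), \mathrm{eff}^{\mathbf{1}}_\infty(\cdot)$; (P3) for each $v$, $\mathrm{emin}(v)$ = identifier of a minimum-cost edge containing $v$ seen so far; (P4) stores $b(v)$ for each $v$. At the end, given $\epsilon$: if $\epsilon \geq 1/\sqrt{n}$, let $r^*$ be the largest integer with $b(I(\leq r^* )) \leq \epsilon b(V)$ where $I(\leq r) = \{ v : \mathrm{eff}_\infty(v) \leq r \}$, and output the partial function mapping each $v \in V \setminus I(\leq r^* )$ to $\mathrm{eid}_\infty(v)$. If $\epsilon < 1/\sqrt{n}$, let $r^*$ be the largest integer with $|I^{\mathbf{1}}(\leq r^* )| \leq \sqrt{n}$ where $I^{\mathbf{1}}(\leq r) = \{ v : \mathrm{eff}^{\mathbf{1}}_\infty(v) \leq r \}$, and output the total function mapping each $v \in V \setminus I^{\mathbf{1}}(\leq r^* )$ to $\mathrm{eid}^{\mathbf{1}}_\infty(v)$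 and each $v \in I^{\mathbf{1}}(\leq r^* )$ to $\mathrm{emin}(v)$. *)

theory Defs
  imports Complex_Main
begin

type_synonym edge = "nat \<times> nat set \<times> real"
type_synonym stream = "edge list"

definition eid_of :: "edge \<Rightarrow> nat" where "eid_of e = fst e"
definition verts_of :: "edge \<Rightarrow> nat set" where "verts_of e = fst (snd e)"
definition cost_of :: "edge \<Rightarrow> real" where "cost_of e = snd (snd e)"

text \<open>Weighted hypergraph (V, E, b, c) given by the vertex set, the benefits and the stream.\<close>
definition weighted_hypergraph :: "nat set \<Rightarrow> (nat \<Rightarrow> real) \<Rightarrow> stream \<Rightarrow> bool" where
  "weighted_hypergraph V b es \<longleftrightarrow>
     finite V \<and>
     (\<forall>v\<in>V. b v \<in> \<rat> \<and> b v > 0) \<and>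
     (\<forall>e\<in>set es. verts_of e \<noteq> {} \<and> verts_of e \<subseteq> V \<and> cost_of e \<in> \<rat> \<and> cost_of e > 0) \<and>
     distinct (map eid_of es)"

definition every_vertex_covered :: "nat set \<Rightarrow> stream \<Rightarrow> bool" where
  "every_vertex_covered V es \<longleftrightarrow> (\<forall>v\<in>V. \<exists>e\<in>set es. v \<in> verts_of e)"

text \<open>Edge covers: sets of positions in the stream (E is a multiset).\<close>
definition edge_cover :: "nat set \<Rightarrow> stream \<Rightarrow> nat set \<Rightarrow> bool" where
  "edge_cover V es F \<longleftrightarrow> F \<subseteq> {..<length es} \<and> (\<Union>t\<in>F. verts_of (es ! t)) = V"

definition cover_cost :: "stream \<Rightarrow> nat set \<Rightarrow> real" where
  "cover_cost es F = (\<Sum>t\<in>F. cost_of (es ! t))"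

definition min_edge_cover :: "nat set \<Rightarrow> stream \<Rightarrow> nat set \<Rightarrow> bool" where
  "min_edge_cover V es F \<longleftrightarrow> edge_cover V es F \<and>
     (\<forall>F'. edge_cover V es F' \<longrightarrow> cover_cost es F \<le> cover_cost es F')"

definition cover_certificate :: "nat set \<Rightarrow> (nat \<Rightarrow> real) \<Rightarrow> stream \<Rightarrow> real \<Rightarrow> (nat \<Rightarrow> nat option) \<Rightarrow> bool" where
  "cover_certificate V b es \<delta> \<chi> \<longleftrightarrow>
     dom \<chi> \<subseteq> V \<and>
     (\<forall>v i. \<chi> v = Some i \<longrightarrow> (\<exists>e\<in>set es. eid_of e = i \<and> v \<in> verts_of e)) \<and>
     sum b (dom \<chi>) \<ge> \<delta> * sum b V"

definition image_cost :: "stream \<Rightarrow> (nat \<Rightarrow> nat option) \<Rightarrow> real" where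
  "image_cost es \<chi> = (\<Sum>t\<in>{t. t < length es \<and> eid_of (es ! t) \<in> ran \<chi>}. cost_of (es ! t))"

text \<open>Procedure COVER. State: (eid, eff); eff v = None encodes -infinity, eid v = None encodes NULL.\<close>
type_synonym cover_state = "(nat \<Rightarrow> nat option) \<times> (nat \<Rightarrow> int option)"

definition lev :: "real \<Rightarrow> real \<Rightarrow> int" where
  "lev bT c = \<lceil>log 2 (bT / c)\<rceil>"

definition eff_less :: "int option \<Rightarrow> int \<Rightarrow> bool" where
  "eff_less x l = (case x of None \<Rightarrow> True | Some k \<Rightarrow> k < l)"

definition eff_le :: "int option \<Rightarrow> int \<Rightarrow> bool" where
  "eff_le x r = (case x of None \<Rightarrow> True | Some k \<Rightarrow> k \<le> r)"

text \<open>Non-empty effective subsets (the empty set has benefit 0 and is never strictly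
  preferable to a non-empty effective set; choosing it means no update).\<close>
definition effective :: "(nat \<Rightarrow> real) \<Rightarrow> (nat \<Rightarrow> int option) \<Rightarrow> edge \<Rightarrow> nat set \<Rightarrow> bool" where
  "effective \<beta> eff e T \<longleftrightarrow> T \<subseteq> verts_of e \<and> T \<noteq> {} \<and>
     (\<forall>v\<in>T. eff_less (eff v) (lev (sum \<beta> T) (cost_of e)))"

definition cover_step :: "(nat \<Rightarrow> real) \<Rightarrow> edge \<Rightarrow> cover_state \<Rightarrow> cover_state \<Rightarrow> bool" where
  "cover_step \<beta> e s s' \<longleftrightarrow>
     ((\<not> (\<exists>T. effective \<beta> (snd s) e T)) \<and> s' = s) \<or>
     (\<exists>T. effective \<beta> (snd s) e T \<and>
          (\<forall>T'. effective \<beta> (snd s) e T' \<longrightarrow> sum \<beta> T' \<le> sum \<beta> T) \<and>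
          s' = ((\<lambda>v. if v \<in> T then Some (eid_of e) else fst s v),
                (\<lambda>v. if v \<in> T then Some (lev (sum \<beta> T) (cost_of e)) else snd s v)))"

text \<open>All possible runs of COVER (ties among maximal effective sets are resolved arbitrarily).\<close>
fun cover_run :: "(nat \<Rightarrow> real) \<Rightarrow> stream \<Rightarrow> cover_state \<Rightarrow> cover_state \<Rightarrow> bool" where
  "cover_run \<beta> [] s s' \<longleftrightarrow> s' = s"
| "cover_run \<beta> (e # es) s s' \<longleftrightarrow> (\<exists>s1. cover_step \<beta> e s s1 \<and> cover_run \<beta> es s1 s')"

definition cover_init :: cover_state where
  "cover_init = ((\<lambda>_. None), (\<lambda>_. None))"

definition emin_ok :: "nat set \<Rightarrow> stream \<Rightarrow> (nat \<Rightarrow> nat) \<Rightarrow> bool" where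
  "emin_ok V es emin \<longleftrightarrow>
     (\<forall>v\<in>V. \<exists>e\<in>set es. eid_of e = emin v \<and> v \<in> verts_of e \<and>
        (\<forall>e'\<in>set es. v \<in> verts_of e' \<longrightarrow> cost_of e \<le> cost_of e'))"

definition sssc_output ::
  "nat set \<Rightarrow> (nat \<Rightarrow> real) \<Rightarrow> cover_state \<Rightarrow> cover_state \<Rightarrow> (nat \<Rightarrow> nat) \<Rightarrow> real \<Rightarrow> (nat \<Rightarrow> nat option)" where
  "sssc_output V b s1 s2 emin \<epsilon> =
     (let n = card V in
      if \<epsilon> \<ge> 1 / sqrt (real n) then
        (let I = (\<lambda>r::int. {v\<in>V. eff_le (snd s1 v) r});
             rs = (GREATEST r::int. sum b (I r) \<le> \<epsilon> * sum b V)
         in (\<lambda>v. if v \<in> V - I rs then fst s1 v else None))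
      else
        (let I = (\<lambda>r::int. {v\<in>V. eff_le (snd s2 v) r});
             rs = (GREATEST r::int. real (card (I r)) \<le> sqrt (real n))
         in (\<lambda>v. if v \<in> V - I rs then fst s2 v
                 else if v \<in> I rs then Some (emin v) else None)))"

text \<open>min{1/x, y} with the convention min{1/0, y} = y.\<close>
definition min_inv :: "real \<Rightarrow> real \<Rightarrow> real" where
  "min_inv x y = (if x = 0 then y else min (1 / x) y)"

end

theory Submission imports Defs begin

lemma lev_mono: "0 < x \<Longrightarrow> x \<le> y \<Longrightarrow> 0 < c \<Longrightarrow> lev x c \<le> lev y c"
  unfolding lev_def by (intro ceiling_mono) (simp add: divide_right_mono)

lemma lev_bound: assumes "0<x" "0<c" shows "c < x * 2 powr (1 - real_of_int (lev x c))"
proof -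
  have "real_of_int (lev x c) - 1 < log 2 (x/c)" unfolding lev_def
    by linarith
  hence "2 powr (real_of_int (lev x c) - 1) < x/c" using assms by (simp add: less_log_iff)
  hence h1: "c * 2 powr (real_of_int (lev x c) - 1) < x" using assms by (simp add: field_simps)
  have h2: "2 powr (real_of_int (lev x c) - 1) * 2 powr (1 - real_of_int (lev x c)) = 1"
    by (simp add: powr_add[symmetric])
  show ?thesis
  proof -
    have "c = (c * 2 powr (real_of_int (lev x c) - 1)) * 2 powr (1 - real_of_int (lev x c))"
      using h2 by (simp add: mult.assoc)
    also have "\<dots> < x * 2 powr (1 - real_of_int (lev x c))"
      using h1 by (intro mult_strict_right_mono) auto
    finally show ?thesis .
  qed
qed

lemma lev_upper: assumes "0<x" "0<c" "lev x c \<le> k" shows "x \<le> 2 powr (real_of_int k) * c"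
proof -
  have "log 2 (x/c) \<le> real_of_int k" using assms(3) unfolding lev_def by linarith
  hence "x/c \<le> 2 powr (real_of_int k)" using assms by (simp add: log_le_iff)
  thus ?thesis using assms by (simp add: field_simps)
qed

definition acost :: "stream \<Rightarrow> nat set \<Rightarrow> real" where
  "acost es I = (\<Sum>t\<in>{t. t < length es \<and> eid_of (es!t) \<in> I}. cost_of (es!t))"

definition gpot :: "int \<Rightarrow> int option \<Rightarrow> real" where
  "gpot r x = (case x of None \<Rightarrow> 0 | Some k \<Rightarrow>
     if r < k then 2 powr (1 - real_of_int r) - 2 powr (1 - real_of_int k) else 0)"

definition imgset :: "nat set \<Rightarrow> cover_state \<Rightarrow> int \<Rightarrow> nat set" where
  "imgset V s r = {i. \<exists>v\<in>V. fst s v = Some i \<and> (\<exists>k. snd s v = Some k \<and> r < k)}"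

definition Phi :: "nat set \<Rightarrow> (nat \<Rightarrow> real) \<Rightarrow> cover_state \<Rightarrow> int \<Rightarrow> real" where
  "Phi V \<beta> s r = (\<Sum>v\<in>V. \<beta> v * gpot r (snd s v))"

definition noeff :: "(nat \<Rightarrow> real) \<Rightarrow> cover_state \<Rightarrow> edge \<Rightarrow> bool" where
  "noeff \<beta> s e \<longleftrightarrow> (\<forall>S. S \<subseteq> verts_of e \<and> S \<noteq> {} \<longrightarrow>
     (\<exists>v\<in>S. \<exists>k. snd s v = Some k \<and> lev (sum \<beta> S) (cost_of e) \<le> k))"

definition cinv :: "nat set \<Rightarrow> (nat \<Rightarrow> real) \<Rightarrow> stream \<Rightarrow> stream \<Rightarrow> cover_state \<Rightarrow> bool" where
  "cinv V \<beta> es0 P s \<longleftrightarrow> (\<forall>v. (fst s v = None) = (snd s v = None)) \<and>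
     (\<forall>v i. fst s v = Some i \<longrightarrow> (\<exists>e\<in>set es0. eid_of e = i \<and> v \<in> verts_of e)) \<and>
     (\<forall>e\<in>set P. noeff \<beta> s e) \<and>
     (\<forall>r. acost es0 (imgset V s r) \<le> Phi V \<beta> s r)"

lemma gpot_nonneg: "0 \<le> gpot r x"
  unfolding gpot_def by (auto split: option.splits)

lemma gpot_le: "gpot r x \<le> 2 powr (1 - real_of_int r)"
  unfolding gpot_def by (auto split: option.splits)

lemma eff_less_mono: "eff_less x a \<Longrightarrow> a \<le> b \<Longrightarrow> eff_less x b"
  unfolding eff_less_def by (auto split: option.splits)

lemma gpot_mono: "eff_less x l \<Longrightarrow> gpot r x \<le> gpot r (Some l)"
  unfolding gpot_def eff_less_def by (auto split: option.splits)

lemma gpot_inc: assumes "eff_less x l" "r < l"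
  shows "gpot r x + 2 powr (1 - real_of_int l) \<le> gpot r (Some l)"
proof (cases x)
  case None
  have "2 powr (1 - real_of_int l) + 2 powr (1 - real_of_int l) = 2 powr (2 - real_of_int l)"
  proof -
    have e: "2 - real_of_int l = 1 + (1 - real_of_int l)" by simp
    have "2 powr (2 - real_of_int l) = 2 powr 1 * 2 powr (1 - real_of_int l)"
      unfolding e by (rule powr_add)
    thus ?thesis by simp
  qed
  also have "\<dots> \<le> 2 powr (1 - real_of_int r)" using assms by simp
  finally show ?thesis using None assms unfolding gpot_def by simp
next
  case (Some k)
  have kl: "k < l" using assms Some unfolding eff_less_def by simp
  have a: "2 powr (1 - real_of_int l) + 2 powr (1 - real_of_int l) = 2 powr (2 - real_of_int l)"
  proof -
    have e: "2 - real_of_int l = 1 + (1 - real_of_int l)" by simp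
    have "2 powr (2 - real_of_int l) = 2 powr 1 * 2 powr (1 - real_of_int l)"
      unfolding e by (rule powr_add)
    thus ?thesis by simp
  qed
  have b: "2 powr (2 - real_of_int l) \<le> 2 powr (1 - real_of_int r)" using assms by simp
  have c: "2 powr (2 - real_of_int l) \<le> 2 powr (1 - real_of_int k)" using kl by simp
  show ?thesis using Some assms a b c unfolding gpot_def by auto
qed

lemma noeff_persist:
  assumes "\<And>v k. snd s v = Some k \<Longrightarrow> \<exists>k'. snd s' v = Some k' \<and> k \<le> k'"
    and "noeff \<beta> s e"
  shows "noeff \<beta> s' e"
  unfolding noeff_def
proof (intro allI impI)
  fix S assume S: "S \<subseteq> verts_of e \<and> S \<noteq> {}"
  then obtain v k where "v \<in> S" "snd s v = Some k" "lev (sum \<beta> S) (cost_of e) \<le> k"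
    using assms(2) unfolding noeff_def by blast
  moreover obtain k' where "snd s' v = Some k'" "k \<le> k'" using assms(1) calculation(2) by blast
  ultimately show "\<exists>v\<in>S. \<exists>k. snd s' v = Some k \<and> lev (sum \<beta> S) (cost_of e) \<le> k"
    by force
qed

locale sset =
  fixes V :: "nat set" and \<beta> :: "nat \<Rightarrow> real" and es0 :: stream
  assumes finV: "finite V" and bpos: "\<And>v. v \<in> V \<Longrightarrow> \<beta> v > 0"
    and edges: "\<And>e. e \<in> set es0 \<Longrightarrow> verts_of e \<noteq> {} \<and> verts_of e \<subseteq> V \<and> cost_of e > 0"
    and dist: "distinct (map eid_of es0)"
begin

lemma cnn: "t < length es0 \<Longrightarrow> 0 \<le> cost_of (es0!t)"
  using edges[OF nth_mem, of t] by auto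

lemma acost_nonneg: "0 \<le> acost es0 I"
  unfolding acost_def by (rule sum_nonneg) (auto intro: cnn)

lemma acost_mono: "I \<subseteq> J \<Longrightarrow> acost es0 I \<le> acost es0 J"
  unfolding acost_def
  by (rule sum_mono2) (auto intro: cnn)

lemma acost_Un: "acost es0 (I \<union> J) \<le> acost es0 I + acost es0 J"
proof -
  let ?A = "{t. t < length es0 \<and> eid_of (es0!t) \<in> I}"
  let ?B = "{t. t < length es0 \<and> eid_of (es0!t) \<in> J}"
  have eq: "{t. t < length es0 \<and> eid_of (es0!t) \<in> I \<union> J} = ?A \<union> ?B" by auto
  have "(\<Sum>t\<in>?A \<union> ?B. cost_of (es0!t)) \<le> (\<Sum>t\<in>?A. cost_of (es0!t)) + (\<Sum>t\<in>?B. cost_of (es0!t))"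
  proof -
    have "(\<Sum>t\<in>?A \<union> ?B. cost_of (es0!t)) = (\<Sum>t\<in>?A. cost_of (es0!t)) + (\<Sum>t\<in>?B. cost_of (es0!t)) - (\<Sum>t\<in>?A \<inter> ?B. cost_of (es0!t))"
      by (rule sum_Un) auto
    moreover have "0 \<le> (\<Sum>t\<in>?A \<inter> ?B. cost_of (es0!t))" by (rule sum_nonneg) (auto intro: cnn)
    ultimately show ?thesis by linarith
  qed
  thus ?thesis unfolding acost_def eq .
qed

lemma acost_single: assumes "e \<in> set es0" shows "acost es0 {eid_of e} \<le> cost_of e"
proof -
  obtain t0 where t0: "t0 < length es0" "es0 ! t0 = e" using assms by (auto simp: in_set_conv_nth)
  have uniq: "t = t0" if "t < length es0" "eid_of (es0 ! t) = eid_of e" for t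
  proof -
    have "map eid_of es0 ! t = map eid_of es0 ! t0" using t0 that by simp
    moreover have "length (map eid_of es0) = length es0" by simp
    ultimately show "t = t0" using nth_eq_iff_index_eq[OF dist, of t t0] t0(1) that(1) by metis
  qed
  have "{t. t < length es0 \<and> eid_of (es0!t) \<in> {eid_of e}} = {t0}"
    using uniq t0 by blast
  thus ?thesis unfolding acost_def using t0 by simp
qed

end

context sset begin

lemma step_inv:
  assumes st: "cover_step \<beta> e s s'" and e: "e \<in> set es0" and I: "cinv V \<beta> es0 P s"
  shows "cinv V \<beta> es0 (P @ [e]) s'"
  using st unfolding cover_step_def
proof (elim disjE conjE exE)
  assume ne: "\<not> (\<exists>T. effective \<beta> (snd s) e T)" and ss: "s' = s"
  have "noeff \<beta> s e" unfolding noeff_def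
  proof (intro allI impI)
    fix S assume S: "S \<subseteq> verts_of e \<and> S \<noteq> {}"
    hence "\<not> effective \<beta> (snd s) e S" using ne by blast
    then obtain v where "v\<in>S" "\<not> eff_less (snd s v) (lev (sum \<beta> S) (cost_of e))"
      using S unfolding effective_def by auto
    moreover obtain k where "snd s v = Some k" "lev (sum \<beta> S) (cost_of e) \<le> k"
      using calculation(2) by (cases "snd s v") (auto simp: eff_less_def)
    ultimately show "\<exists>v\<in>S. \<exists>k. snd s v = Some k \<and> lev (sum \<beta> S) (cost_of e) \<le> k"
      by blast
  qed
  thus ?thesis using I ss unfolding cinv_def by auto
next
  fix T assume eT: "effective \<beta> (snd s) e T"
    and mx: "\<forall>T'. effective \<beta> (snd s) e T' \<longrightarrow> sum \<beta> T' \<le> sum \<beta> T"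
    and s'def: "s' = ((\<lambda>v. if v \<in> T then Some (eid_of e) else fst s v),
                (\<lambda>v. if v \<in> T then Some (lev (sum \<beta> T) (cost_of e)) else snd s v))"
  define l where "l = lev (sum \<beta> T) (cost_of e)"
  have Te: "T \<subseteq> verts_of e" "T \<noteq> {}" and Tl: "\<And>v. v\<in>T \<Longrightarrow> eff_less (snd s v) l"
    using eT unfolding effective_def l_def by auto
  have eV: "verts_of e \<subseteq> V" and ce: "cost_of e > 0" using edges[OF e] by auto
  have TV: "T \<subseteq> V" using Te eV by auto
  have finT: "finite T" using TV finV finite_subset by blast
  have bT: "sum \<beta> T > 0" using finT Te(2) TV bpos by (intro sum_pos) auto
  have fst': "fst s' v = (if v\<in>T then Some (eid_of e) else fst s v)" for v using s'def by simp
  have snd': "snd s' v = (if v\<in>T then Some l else snd s v)" for v using s'def l_def by simp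
  have levmono: "lev (sum \<beta> A) (cost_of e) \<le> lev (sum \<beta> B) (cost_of e)"
    if "A \<subseteq> B" "B \<subseteq> V" "A \<noteq> {}" for A B
  proof -
    have fB: "finite B" using that finV finite_subset by blast
    have "0 < sum \<beta> A" using that fB bpos by (intro sum_pos) (auto intro: finite_subset)
    moreover have "sum \<beta> A \<le> sum \<beta> B" using that fB bpos
      by (intro sum_mono2) (auto intro: less_imp_le)
    ultimately show ?thesis using ce by (rule lev_mono)
  qed
  have I1: "\<forall>v. (fst s v = None) = (snd s v = None)"
    and I2: "\<forall>v i. fst s v = Some i \<longrightarrow> (\<exists>e\<in>set es0. eid_of e = i \<and> v \<in> verts_of e)"
    and I3: "\<forall>e\<in>set P. noeff \<beta> s e"
    and I4: "\<forall>r. acost es0 (imgset V s r) \<le> Phi V \<beta> s r"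
    using I unfolding cinv_def by auto
  have grow: "\<exists>k'. snd s' v = Some k' \<and> k \<le> k'" if "snd s v = Some k" for v k
  proof (cases "v \<in> T")
    case True
    thus ?thesis using Tl[OF True] that snd' by (auto simp: eff_less_def)
  qed (use snd' that in auto)
  have J1: "\<forall>v. (fst s' v = None) = (snd s' v = None)" using I1 fst' snd' by auto
  have J2: "\<forall>v i. fst s' v = Some i \<longrightarrow> (\<exists>e\<in>set es0. eid_of e = i \<and> v \<in> verts_of e)"
    using I2 fst' Te(1) e by auto
  have J3: "\<forall>e'\<in>set P. noeff \<beta> s' e'" using I3 grow noeff_persist by blast
  have J4: "noeff \<beta> s' e" unfolding noeff_def
  proof (intro allI impI)
    fix S assume S: "S \<subseteq> verts_of e \<and> S \<noteq> {}"
    show "\<exists>v\<in>S. \<exists>k. snd s' v = Some k \<and> lev (sum \<beta> S) (cost_of e) \<le> k"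
    proof (rule ccontr)
      assume nn: "\<not> ?thesis"
      have hS: "eff_less (snd s' v) (lev (sum \<beta> S) (cost_of e))" if "v \<in> S" for v
        using nn that by (cases "snd s' v") (auto simp: eff_less_def)
      let ?U = "T \<union> S"
      have UV: "?U \<subseteq> V" using S TV eV by auto
      have lTU: "l \<le> lev (sum \<beta> ?U) (cost_of e)" unfolding l_def
        using UV Te by (intro levmono) auto
      have lSU: "lev (sum \<beta> S) (cost_of e) \<le> lev (sum \<beta> ?U) (cost_of e)"
        using UV S by (intro levmono) auto
      have "effective \<beta> (snd s) e ?U" unfolding effective_def
      proof (intro conjI ballI)
        show "?U \<subseteq> verts_of e" using S Te by auto
        show "?U \<noteq> {}" using Te by auto
        fix v assume "v \<in> ?U"
        show "eff_less (snd s v) (lev (sum \<beta> ?U) (cost_of e))"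
        proof (cases "v \<in> T")
          case True thus ?thesis using Tl lTU eff_less_mono by blast
        next
          case False
          hence "v \<in> S" using \<open>v \<in> ?U\<close> by auto
          thus ?thesis using hS[of v] snd' False lSU eff_less_mono by fastforce
        qed
      qed
      hence "sum \<beta> ?U \<le> sum \<beta> T" using mx by blast
      moreover have "sum \<beta> ?U = sum \<beta> T + sum \<beta> (S - T)"
      proof -
        have eq: "?U = T \<union> (S - T)" by auto
        have f2: "finite (S - T)" using UV finV finite_subset by blast
        show ?thesis unfolding eq by (rule sum.union_disjoint) (use finT f2 in auto)
      qed
      ultimately have "sum \<beta> (S - T) \<le> 0" by simp
      moreover have "S - T = {}"
      proof (rule ccontr)
        assume "S - T \<noteq> {}"
        moreover have "finite (S - T)" using UV finV finite_subset by blast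
        ultimately have "sum \<beta> (S - T) > 0" using UV bpos by (intro sum_pos) auto
        thus False using \<open>sum \<beta> (S - T) \<le> 0\<close> by simp
      qed
      hence ST: "S \<subseteq> T" by auto
      obtain v where v: "v \<in> S" using S by auto
      have "l < lev (sum \<beta> S) (cost_of e)" using hS[OF v] snd' ST v by (auto simp: eff_less_def)
      moreover have "lev (sum \<beta> S) (cost_of e) \<le> l" unfolding l_def
        using ST TV S by (intro levmono) auto
      ultimately show False by simp
    qed
  qed
  have J5: "acost es0 (imgset V s' r) \<le> Phi V \<beta> s' r" for r
  proof -
    have gm: "\<beta> v * gpot r (snd s v) \<le> \<beta> v * gpot r (snd s' v)" if "v \<in> V" for v
    proof (cases "v \<in> T")
      case True
      thus ?thesis using gpot_mono[OF Tl[OF True], of r] snd' bpos[OF that]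
        by (auto intro: mult_left_mono)
    qed (use snd' in auto)
    have PhiM: "Phi V \<beta> s r \<le> Phi V \<beta> s' r" unfolding Phi_def by (rule sum_mono) (rule gm)
    show ?thesis
    proof (cases "l \<le> r")
      case True
      have "imgset V s' r \<subseteq> imgset V s r" unfolding imgset_def using True fst' snd' by auto
      hence "acost es0 (imgset V s' r) \<le> acost es0 (imgset V s r)" by (rule acost_mono)
      thus ?thesis using I4 PhiM by (meson order_trans)
    next
      case False
      hence rl: "r < l" by simp
      have "imgset V s' r \<subseteq> imgset V s r \<union> {eid_of e}" unfolding imgset_def using fst' snd' by auto
      hence "acost es0 (imgset V s' r) \<le> acost es0 (imgset V s r \<union> {eid_of e})" by (rule acost_mono)
      also have "\<dots> \<le> acost es0 (imgset V s r) + acost es0 {eid_of e}" by (rule acost_Un)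
      also have "\<dots> \<le> Phi V \<beta> s r + cost_of e" using I4 acost_single[OF e] by (meson add_mono)
      also have "cost_of e < sum \<beta> T * 2 powr (1 - real_of_int l)"
        unfolding l_def using bT ce by (rule lev_bound)
      also have "sum \<beta> T * 2 powr (1 - real_of_int l) = (\<Sum>v\<in>T. \<beta> v * 2 powr (1 - real_of_int l))"
        by (simp add: sum_distrib_right)
      also have "\<dots> \<le> (\<Sum>v\<in>T. \<beta> v * gpot r (snd s' v) - \<beta> v * gpot r (snd s v))"
      proof (rule sum_mono)
        fix v assume vT: "v \<in> T"
        have "gpot r (snd s v) + 2 powr (1 - real_of_int l) \<le> gpot r (Some l)"
          using gpot_inc[OF Tl[OF vT] rl] .
        hence "2 powr (1 - real_of_int l) \<le> gpot r (snd s' v) - gpot r (snd s v)"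
          using snd' vT by simp
        hence "\<beta> v * 2 powr (1 - real_of_int l) \<le> \<beta> v * (gpot r (snd s' v) - gpot r (snd s v))"
          using bpos[of v] vT TV by (intro mult_left_mono) auto
        thus "\<beta> v * 2 powr (1 - real_of_int l) \<le> \<beta> v * gpot r (snd s' v) - \<beta> v * gpot r (snd s v)"
          by (simp add: right_diff_distrib)
      qed
      also have "\<dots> = (\<Sum>v\<in>V. \<beta> v * gpot r (snd s' v) - \<beta> v * gpot r (snd s v))"
        using finV TV snd' by (intro sum.mono_neutral_left) auto
      also have "\<dots> = Phi V \<beta> s' r - Phi V \<beta> s r" unfolding Phi_def by (simp add: sum_subtractf)
      finally show ?thesis by simp
    qed
  qed
  show ?thesis unfolding cinv_def using J1 J2 J3 J4 J5 by auto
qed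

lemma run_inv:
  assumes "cover_run \<beta> xs s s'" "set xs \<subseteq> set es0" "cinv V \<beta> es0 P s"
  shows "cinv V \<beta> es0 (P @ xs) s'"
  using assms
proof (induction xs arbitrary: P s)
  case Nil thus ?case by simp
next
  case (Cons x xs)
  have "\<exists>s1. cover_step \<beta> x s s1 \<and> cover_run \<beta> xs s1 s'" using Cons.prems(1) by simp
  then obtain s1 where r1: "cover_step \<beta> x s s1" and r2: "cover_run \<beta> xs s1 s'" by blast
  have "cinv V \<beta> es0 (P @ [x]) s1" using step_inv[OF r1] Cons.prems by auto
  moreover have IH': "\<And>Q. cinv V \<beta> es0 Q s1 \<Longrightarrow> cinv V \<beta> es0 (Q @ xs) s'"
    using Cons.IH[OF r2] Cons.prems(2) by auto
  ultimately have "cinv V \<beta> es0 ((P @ [x]) @ xs) s'" by blast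
  thus ?case by simp
qed

lemma init_inv: "cinv V \<beta> es0 [] cover_init"
  unfolding cinv_def cover_init_def imgset_def Phi_def gpot_def acost_def by simp

lemma final_inv: "cover_run \<beta> es0 cover_init s \<Longrightarrow> cinv V \<beta> es0 es0 s"
  using run_inv[of es0 cover_init s "[]"] init_inv by simp

end


lemma int_greatest:
  fixes P :: "int \<Rightarrow> bool"
  assumes "P a" "\<And>r. P r \<Longrightarrow> r \<le> B"
  shows "P (Greatest P) \<and> (\<forall>r. P r \<longrightarrow> r \<le> Greatest P)"
proof -
  let ?S = "{r. P r \<and> a \<le> r}"
  have fS: "finite ?S" by (rule finite_subset[of _ "{a..B}"]) (use assms in auto)
  have neS: "?S \<noteq> {}" using assms by auto
  define m where "m = Max ?S"
  have mS: "m \<in> ?S" unfolding m_def using fS neS by (rule Max_in)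
  have mx: "r \<le> m" if "P r" for r
  proof (cases "a \<le> r")
    case True thus ?thesis unfolding m_def using fS that by (intro Max_ge) auto
  next
    case False thus ?thesis using mS by auto
  qed
  have "Greatest P = m" using mS mx by (intro Greatest_equality) auto
  thus ?thesis using mS mx by auto
qed

lemma sum_UN_le_gen:
  fixes f :: "nat \<Rightarrow> real"
  assumes "finite F" "\<And>t. t \<in> F \<Longrightarrow> finite (A t)" "\<And>x. 0 \<le> f x"
  shows "sum f (\<Union>t\<in>F. A t) \<le> (\<Sum>t\<in>F. sum f (A t))"
  using assms(1,2)
proof (induction F rule: finite_induct)
  case empty thus ?case by simp
next
  case (insert x F)
  have f1: "finite (A x)" "finite (\<Union>t\<in>F. A t)" using insert by auto
  have "sum f (\<Union>t\<in>insert x F. A t) = sum f (A x \<union> (\<Union>t\<in>F. A t))" by simp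
  also have "\<dots> = sum f (A x) + sum f (\<Union>t\<in>F. A t) - sum f (A x \<inter> (\<Union>t\<in>F. A t))"
    using f1 by (rule sum_Un)
  also have "\<dots> \<le> sum f (A x) + sum f (\<Union>t\<in>F. A t)"
    using sum_nonneg[of _ f] assms(3) by (simp add: sum_nonneg)
  also have "\<dots> \<le> sum f (A x) + (\<Sum>t\<in>F. sum f (A t))" using insert by simp
  finally show ?case using insert by simp
qed

context sset begin

lemma acost_UN_le: "finite A \<Longrightarrow> acost es0 (\<Union>a\<in>A. J a) \<le> (\<Sum>a\<in>A. acost es0 (J a))"
proof (induction A rule: finite_induct)
  case empty thus ?case unfolding acost_def by simp
next
  case (insert x A)
  have "acost es0 (\<Union>a\<in>insert x A. J a) = acost es0 (J x \<union> (\<Union>a\<in>A. J a))" by simp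
  also have "\<dots> \<le> acost es0 (J x) + acost es0 (\<Union>a\<in>A. J a)" by (rule acost_Un)
  also have "\<dots> \<le> acost es0 (J x) + (\<Sum>a\<in>A. acost es0 (J a))" using insert by simp
  finally show ?case using insert by simp
qed

lemma Phi_le: "Phi V \<beta> s r \<le> 2 powr (1 - real_of_int r) * sum \<beta> V"
  unfolding Phi_def sum_distrib_left
  by (rule sum_mono) (use bpos gpot_le in \<open>auto intro: mult_left_mono less_imp_le simp: mult.commute\<close>)

lemma img_bound: "cinv V \<beta> es0 P s \<Longrightarrow> acost es0 (imgset V s r) \<le> 2 powr (1 - real_of_int r) * sum \<beta> V"
  unfolding cinv_def using Phi_le by (meson order_trans)

lemma cover_cost_nonneg: "edge_cover V es0 OPT \<Longrightarrow> 0 \<le> cover_cost es0 OPT"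
  unfolding cover_cost_def edge_cover_def by (rule sum_nonneg) (auto intro: cnn)

lemma key:
  assumes inv: "cinv V \<beta> es0 es0 s" and ec: "edge_cover V es0 OPT"
  shows "sum \<beta> {v\<in>V. eff_le (snd s v) r} \<le> 2 powr (real_of_int r) * cover_cost es0 OPT"
proof -
  let ?I = "{v\<in>V. eff_le (snd s v) r}"
  have OPTs: "OPT \<subseteq> {..<length es0}" and cov: "(\<Union>t\<in>OPT. verts_of (es0 ! t)) = V"
    using ec unfolding edge_cover_def by auto
  have fO: "finite OPT" using OPTs finite_subset by blast
  have ne: "\<forall>e\<in>set es0. noeff \<beta> s e" using inv unfolding cinv_def by auto
  have eq: "?I = (\<Union>t\<in>OPT. verts_of (es0 ! t) \<inter> ?I)" using cov by auto
  have b0: "0 \<le> (if x \<in> V then \<beta> x else 0)" for x using bpos[of x] by auto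
  have "sum \<beta> ?I = sum (\<lambda>x. if x \<in> V then \<beta> x else 0) ?I" by (rule sum.cong) auto
  also have "\<dots> = sum (\<lambda>x. if x \<in> V then \<beta> x else 0) (\<Union>t\<in>OPT. verts_of (es0 ! t) \<inter> ?I)"
    using eq by simp
  also have "\<dots> \<le> (\<Sum>t\<in>OPT. sum (\<lambda>x. if x \<in> V then \<beta> x else 0) (verts_of (es0 ! t) \<inter> ?I))"
    by (rule sum_UN_le_gen) (use fO finV b0 in auto)
  also have "\<dots> = (\<Sum>t\<in>OPT. sum \<beta> (verts_of (es0 ! t) \<inter> ?I))"
    by (intro sum.cong refl) auto
  also have "\<dots> \<le> (\<Sum>t\<in>OPT. 2 powr (real_of_int r) * cost_of (es0 ! t))"
  proof (rule sum_mono)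
    fix t assume tO: "t \<in> OPT"
    hence tl: "t < length es0" using OPTs by auto
    hence em: "es0 ! t \<in> set es0" by simp
    have ct: "0 < cost_of (es0 ! t)" using edges[OF em] by auto
    let ?S = "verts_of (es0 ! t) \<inter> ?I"
    show "sum \<beta> ?S \<le> 2 powr (real_of_int r) * cost_of (es0 ! t)"
    proof (cases "?S = {}")
      case True thus ?thesis using ct by simp
    next
      case False
      have nt: "noeff \<beta> s (es0 ! t)" using ne em by blast
      have "\<exists>v\<in>?S. \<exists>k. snd s v = Some k \<and> lev (sum \<beta> ?S) (cost_of (es0 ! t)) \<le> k"
        by (rule nt[unfolded noeff_def, rule_format]) (use False in auto)
      then obtain v k where v: "v \<in> ?S" "snd s v = Some k" "lev (sum \<beta> ?S) (cost_of (es0 ! t)) \<le> k"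
        by blast
      have "k \<le> r" using v unfolding eff_le_def by auto
      moreover have "0 < sum \<beta> ?S" using False finV bpos by (intro sum_pos) auto
      ultimately show ?thesis using v(3) ct lev_upper[of "sum \<beta> ?S" "cost_of (es0 ! t)" r] by simp
    qed
  qed
  also have "\<dots> = 2 powr (real_of_int r) * cover_cost es0 OPT"
    unfolding cover_cost_def by (simp add: sum_distrib_left)
  finally show ?thesis .
qed

lemma assigned:
  assumes inv: "cinv V \<beta> es0 es0 s" and cov: "every_vertex_covered V es0" and v: "v \<in> V"
  shows "\<exists>k. snd s v = Some k"
proof -
  obtain e where e: "e \<in> set es0" "v \<in> verts_of e" using cov v unfolding every_vertex_covered_def by blast
  have "noeff \<beta> s e" using inv e unfolding cinv_def by auto
  hence "\<exists>w\<in>{v}. \<exists>k. snd s w = Some k \<and> lev (sum \<beta> {v}) (cost_of e) \<le> k"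
    unfolding noeff_def using e(2) by blast
  thus ?thesis by blast
qed

end


lemma arith1:
  fixes x bV c \<epsilon> :: real
  assumes "0 < x" "0 < \<epsilon>" "\<epsilon> * bV < x * c" "0 \<le> c"
  shows "4 / x * bV \<le> 5 * (1 / \<epsilon>) * c"
proof -
  have "4 * (\<epsilon> * bV) \<le> 5 * (x * c)" using assms by (smt (verit) mult_nonneg_nonneg)
  hence "\<epsilon> * (4 * bV) \<le> x * (5 * c)" by (simp add: algebra_simps)
  thus ?thesis using assms by (simp add: field_simps)
qed

lemma two_powr_m1: "2 powr (1 - real_of_int (m - 1)) = 4 / 2 powr (real_of_int m)"
proof -
  have "1 - real_of_int (m - 1) = 2 - real_of_int m" by simp
  hence "2 powr (1 - real_of_int (m - 1)) = 2 powr 2 / 2 powr (real_of_int m)"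
    by (simp add: powr_diff)
  thus ?thesis by simp
qed

context sset begin

lemma branch1:
  assumes inv: "cinv V \<beta> es0 es0 s1" and cov: "every_vertex_covered V es0"
    and ec: "edge_cover V es0 OPT"
    and e0: "0 \<le> \<epsilon>" "\<epsilon> < 1" and br: "1 / sqrt (real (card V)) \<le> \<epsilon>"
  shows "cover_certificate V \<beta> es0 (1-\<epsilon>) (sssc_output V \<beta> s1 s2 emin \<epsilon>) \<and>
    image_cost es0 (sssc_output V \<beta> s1 s2 emin \<epsilon>)
      \<le> 5 * min_inv \<epsilon> (sqrt (real (card V))) * cover_cost es0 OPT"
proof -
  define I where "I = (\<lambda>r::int. {v\<in>V. eff_le (snd s1 v) r})"
  define P where "P = (\<lambda>r::int. sum \<beta> (I r) \<le> \<epsilon> * sum \<beta> V)"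
  define rs where "rs = Greatest P"
  define \<chi> where "\<chi> = (\<lambda>v. if v \<in> V - I rs then fst s1 v else None)"
  have out: "sssc_output V \<beta> s1 s2 emin \<epsilon> = \<chi>"
    unfolding sssc_output_def Let_def \<chi>_def rs_def I_def P_def using br by simp
  have I1: "\<And>v. (fst s1 v = None) = (snd s1 v = None)"
    and I2: "\<And>v i. fst s1 v = Some i \<Longrightarrow> (\<exists>e\<in>set es0. eid_of e = i \<and> v \<in> verts_of e)"
    using inv unfolding cinv_def by auto
  have asg: "\<And>v. v \<in> V \<Longrightarrow> snd s1 v = Some (the (snd s1 v))"
    using assigned[OF inv cov] by fastforce
  have cc: "0 \<le> cover_cost es0 OPT" using ec by (rule cover_cost_nonneg)
  have ic: "image_cost es0 \<chi> = acost es0 (ran \<chi>)" unfolding image_cost_def acost_def by simp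
  show ?thesis
  proof (cases "V = {}")
    case True
    have "\<chi> = (\<lambda>v. None)" unfolding \<chi>_def using True by auto
    moreover have "acost es0 {} = 0" unfolding acost_def by simp
    moreover have "min_inv \<epsilon> 0 = 0" unfolding min_inv_def using e0 by auto
    ultimately show ?thesis unfolding out cover_certificate_def using True ic by simp
  next
    case False
    have n1: "card V \<ge> 1" using False finV by (simp add: Suc_le_eq card_gt_0_iff)
    have sq: "sqrt (real (card V)) > 0" using n1 by simp
    have epos: "\<epsilon> > 0" using br sq by (smt (verit) divide_pos_pos)
    have bV: "sum \<beta> V > 0" using False finV bpos by (intro sum_pos) auto
    let ?E = "(\<lambda>v. the (snd s1 v)) ` V"
    have fE: "finite ?E" "?E \<noteq> {}" using finV False by auto
    have Pa: "P (Min ?E - 1)"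
    proof -
      have "I (Min ?E - 1) = {}"
      proof -
        have "\<not> eff_le (snd s1 v) (Min ?E - 1)" if "v \<in> V" for v
        proof -
          have "the (snd s1 v) \<ge> Min ?E" using fE that by (intro Min_le) auto
          thus ?thesis using asg[OF that] unfolding eff_le_def by (metis option.simps(5) not_le zle_diff1_eq)
        qed
        thus ?thesis unfolding I_def by auto
      qed
      thus ?thesis unfolding P_def using e0 bV by simp
    qed
    have Pb: "r \<le> Max ?E" if "P r" for r
    proof (rule ccontr)
      assume "\<not> r \<le> Max ?E"
      hence "I r = V"
      proof -
        assume rr: "\<not> r \<le> Max ?E"
        have "eff_le (snd s1 v) r" if "v \<in> V" for v
        proof -
          have "the (snd s1 v) \<le> Max ?E" using fE that by (intro Max_ge) auto
          thus ?thesis using asg[OF that] rr unfolding eff_le_def by (metis option.simps(5) order_trans nle_le)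
        qed
        thus ?thesis unfolding I_def by auto
      qed
      hence "sum \<beta> V \<le> \<epsilon> * sum \<beta> V" using that unfolding P_def by simp
      thus False using bV e0 by (smt (verit) mult_less_cancel_right2)
    qed
    have G: "P rs \<and> (\<forall>r. P r \<longrightarrow> r \<le> rs)" unfolding rs_def using int_greatest[of P, OF Pa Pb] by blast
    have IV: "I rs \<subseteq> V" unfolding I_def by auto
    have dom: "dom \<chi> = V - I rs"
    proof -
      have "fst s1 v \<noteq> None" if "v \<in> V - I rs" for v using asg[of v] that I1[of v] by auto
      thus ?thesis unfolding \<chi>_def dom_def by auto
    qed
    have cert: "cover_certificate V \<beta> es0 (1-\<epsilon>) \<chi>"
      unfolding cover_certificate_def
    proof (intro conjI allI impI)
      show "dom \<chi> \<subseteq> V" using dom by auto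
      fix v i assume "\<chi> v = Some i"
      hence "fst s1 v = Some i" unfolding \<chi>_def by (auto split: if_splits)
      thus "\<exists>e\<in>set es0. eid_of e = i \<and> v \<in> verts_of e" by (rule I2)
    next
      have "sum \<beta> (dom \<chi>) = sum \<beta> V - sum \<beta> (I rs)" unfolding dom using finV IV by (rule sum_diff)
      thus "(1 - \<epsilon>) * sum \<beta> V \<le> sum \<beta> (dom \<chi>)" using G unfolding P_def by (simp add: algebra_simps)
    qed
    have mi: "min_inv \<epsilon> (sqrt (real (card V))) = 1 / \<epsilon>"
    proof -
      have "1 \<le> \<epsilon> * sqrt (real (card V))" using br sq by (simp add: field_simps)
      hence "1 / \<epsilon> \<le> sqrt (real (card V))" using epos by (simp add: field_simps)
      thus ?thesis unfolding min_inv_def using epos by simp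
    qed
    have cost: "acost es0 (ran \<chi>) \<le> 5 * (1 / \<epsilon>) * cover_cost es0 OPT"
    proof (cases "V - I rs = {}")
      case True
      hence "ran \<chi> = {}" unfolding \<chi>_def ran_def by auto
      hence "acost es0 (ran \<chi>) = 0" unfolding acost_def by simp
      thus ?thesis using cc epos by simp
    next
      case False
      let ?D = "V - I rs"
      let ?F = "(\<lambda>v. the (snd s1 v)) ` ?D"
      define m where "m = Min ?F"
      have fF: "finite ?F" "?F \<noteq> {}" using finV False by auto
      have mle: "m \<le> the (snd s1 v)" if "v \<in> ?D" for v unfolding m_def using fF that by (intro Min_le) auto
      obtain v0 where v0: "v0 \<in> ?D" "the (snd s1 v0) = m" unfolding m_def using Min_in[OF fF] by auto
      have "rs < the (snd s1 v0)" using v0 asg[of v0] unfolding I_def eff_le_def by (metis (no_types, lifting) DiffE mem_Collect_eq not_le option.simps(5))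
      hence mrs: "rs < m" using v0 by simp
      have "ran \<chi> \<subseteq> imgset V s1 (m - 1)"
      proof
        fix i assume "i \<in> ran \<chi>"
        then obtain v where "\<chi> v = Some i" unfolding ran_def by auto
        hence v: "v \<in> ?D" "fst s1 v = Some i" unfolding \<chi>_def by (auto split: if_splits)
        have "snd s1 v = Some (the (snd s1 v))" "m - 1 < the (snd s1 v)" using asg[of v] v mle[of v] by auto
        thus "i \<in> imgset V s1 (m - 1)" unfolding imgset_def using v by blast
      qed
      hence "acost es0 (ran \<chi>) \<le> acost es0 (imgset V s1 (m - 1))" by (rule acost_mono)
      also have "\<dots> \<le> 2 powr (1 - real_of_int (m - 1)) * sum \<beta> V" using inv by (rule img_bound)
      also have "\<dots> = 4 / 2 powr (real_of_int m) * sum \<beta> V" by (simp only: two_powr_m1)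
      also have "\<dots> \<le> 5 * (1 / \<epsilon>) * cover_cost es0 OPT"
      proof (rule arith1)
        have "\<not> P m" using G mrs by auto
        hence "\<epsilon> * sum \<beta> V < sum \<beta> (I m)" unfolding P_def by simp
        also have "\<dots> \<le> 2 powr (real_of_int m) * cover_cost es0 OPT" unfolding I_def using inv ec by (rule key)
        finally show "\<epsilon> * sum \<beta> V < 2 powr (real_of_int m) * cover_cost es0 OPT" .
      qed (use epos cc in auto)
      finally show ?thesis .
    qed
    show ?thesis unfolding out mi using cert cost ic by simp
  qed
qed

end


lemma arith2:
  fixes x s c :: real
  assumes "0 < x" "0 < s" "s \<le> x * c"
  shows "4 / x * (s * s) \<le> 4 * s * c"
proof -
  have "s * s \<le> s * (x * c)" using assms by (intro mult_left_mono) auto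
  hence "4 * (s * s) \<le> x * (4 * s * c)" by (simp add: algebra_simps)
  thus ?thesis using assms by (simp add: field_simps)
qed

lemma branch2:
  assumes S1: "sset V b es" and S2: "sset V (\<lambda>_. 1) es"
    and inv: "cinv V (\<lambda>_. 1) es es s2" and cov: "every_vertex_covered V es"
    and ec: "edge_cover V es OPT"
    and e0: "0 \<le> \<epsilon>" "\<epsilon> < 1" and br: "\<not> 1 / sqrt (real (card V)) \<le> \<epsilon>"
    and em: "emin_ok V es emin"
  shows "cover_certificate V b es (1-\<epsilon>) (sssc_output V b s1 s2 emin \<epsilon>) \<and>
    image_cost es (sssc_output V b s1 s2 emin \<epsilon>)
      \<le> 5 * min_inv \<epsilon> (sqrt (real (card V))) * cover_cost es OPT"
proof -
  interpret U: sset V "\<lambda>_. 1" es by (rule S2)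
  have finV: "finite V" and bpos: "\<And>v. v \<in> V \<Longrightarrow> b v > 0" using S1 unfolding sset_def by auto
  define n where "n = card V"
  define I where "I = (\<lambda>r::int. {v\<in>V. eff_le (snd s2 v) r})"
  define P where "P = (\<lambda>r::int. real (card (I r)) \<le> sqrt (real n))"
  define rs where "rs = Greatest P"
  define \<chi> where "\<chi> = (\<lambda>v. if v \<in> V - I rs then fst s2 v else if v \<in> I rs then Some (emin v) else None)"
  have out: "sssc_output V b s1 s2 emin \<epsilon> = \<chi>"
    unfolding sssc_output_def Let_def \<chi>_def rs_def I_def P_def n_def using br by simp
  have I1: "\<And>v. (fst s2 v = None) = (snd s2 v = None)"
    and I2: "\<And>v i. fst s2 v = Some i \<Longrightarrow> (\<exists>e\<in>set es. eid_of e = i \<and> v \<in> verts_of e)"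
    using inv unfolding cinv_def by auto
  have asg: "\<And>v. v \<in> V \<Longrightarrow> snd s2 v = Some (the (snd s2 v))"
    using U.assigned[OF inv cov] by fastforce
  have cc: "0 \<le> cover_cost es OPT" using ec by (rule U.cover_cost_nonneg)
  have ic: "image_cost es \<chi> = acost es (ran \<chi>)" unfolding image_cost_def acost_def by simp
  have VE: "V \<noteq> {}"
  proof
    assume "V = {}" thus False using br e0 by simp
  qed
  have n1: "n \<ge> 1" using VE finV unfolding n_def by (simp add: Suc_le_eq card_gt_0_iff)
  have sq: "sqrt (real n) > 0" using n1 by simp
  have IV: "\<And>r. I r \<subseteq> V" unfolding I_def by auto
  have finI: "\<And>r. finite (I r)" using IV finV finite_subset by blast
  have hAB: "real (card (I rs)) \<le> sqrt (real n) \<and>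
      (\<forall>m. rs < m \<longrightarrow> I m \<noteq> {} \<longrightarrow> sqrt (real n) \<le> real (card (I m)))"
  proof (cases "n = 1")
    case True
    have "card (I rs) \<le> 1" using card_mono[OF finV IV[of rs]] True unfolding n_def by simp
    moreover have "I m \<noteq> {} \<Longrightarrow> 1 \<le> card (I m)" for m using finI[of m] by (simp add: Suc_le_eq card_gt_0_iff)
    ultimately show ?thesis using True by simp
  next
    case False
    hence n2: "n \<ge> 2" using n1 by simp
    have sqn: "sqrt (real n) < real n"
    proof -
      have "1 < sqrt (real n)" using n2 by simp
      hence "sqrt (real n) * 1 < sqrt (real n) * sqrt (real n)" using sq by (intro mult_strict_left_mono) auto
      thus ?thesis by simp
    qed
    let ?E = "(\<lambda>v. the (snd s2 v)) ` V"
    have fE: "finite ?E" "?E \<noteq> {}" using finV VE by auto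
    have Pa: "P (Min ?E - 1)"
    proof -
      have "I (Min ?E - 1) = {}"
      proof -
        have "\<not> eff_le (snd s2 v) (Min ?E - 1)" if "v \<in> V" for v
        proof -
          have "the (snd s2 v) \<ge> Min ?E" using fE that by (intro Min_le) auto
          thus ?thesis using asg[OF that] unfolding eff_le_def by (metis option.simps(5) not_le zle_diff1_eq)
        qed
        thus ?thesis unfolding I_def by auto
      qed
      thus ?thesis unfolding P_def using sq by simp
    qed
    have Pb: "r \<le> Max ?E" if "P r" for r
    proof (rule ccontr)
      assume rr: "\<not> r \<le> Max ?E"
      have "eff_le (snd s2 v) r" if "v \<in> V" for v
      proof -
        have "the (snd s2 v) \<le> Max ?E" using fE that by (intro Max_ge) auto
        thus ?thesis using asg[OF that] rr unfolding eff_le_def by (metis option.simps(5) order_trans nle_le)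
      qed
      hence "I r = V" unfolding I_def by auto
      hence "real n \<le> sqrt (real n)" using that unfolding P_def n_def by simp
      thus False using sqn by simp
    qed
    have G: "P rs \<and> (\<forall>r. P r \<longrightarrow> r \<le> rs)" unfolding rs_def using int_greatest[of P, OF Pa Pb] by blast
    have "sqrt (real n) \<le> real (card (I m))" if "rs < m" for m
    proof (rule ccontr)
      assume "\<not> sqrt (real n) \<le> real (card (I m))"
      hence "P m" unfolding P_def by simp
      thus False using G that by auto
    qed
    thus ?thesis using G unfolding P_def by blast
  qed
  have dom: "dom \<chi> = V"
  proof -
    have "fst s2 v \<noteq> None" if "v \<in> V - I rs" for v using asg[of v] that I1[of v] by auto
    thus ?thesis unfolding \<chi>_def dom_def using IV by auto
  qed
  have cert: "cover_certificate V b es (1-\<epsilon>) \<chi>"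
    unfolding cover_certificate_def
  proof (intro conjI allI impI)
    show "dom \<chi> \<subseteq> V" using dom by auto
    fix v i assume h: "\<chi> v = Some i"
    show "\<exists>e\<in>set es. eid_of e = i \<and> v \<in> verts_of e"
    proof (cases "v \<in> V - I rs")
      case True
      hence "fst s2 v = Some i" using h unfolding \<chi>_def by simp
      thus ?thesis by (rule I2)
    next
      case False
      hence "v \<in> I rs" "i = emin v" using h unfolding \<chi>_def by (auto split: if_splits)
      thus ?thesis using em IV unfolding emin_ok_def by blast
    qed
  next
    have "0 \<le> sum b V" using bpos by (intro sum_nonneg) (auto intro: less_imp_le)
    thus "(1 - \<epsilon>) * sum b V \<le> sum b (dom \<chi>)" unfolding dom using e0 by (smt (verit) mult_left_le_one_le mult.commute)
  qed
  have mi: "min_inv \<epsilon> (sqrt (real (card V))) = sqrt (real n)"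
  proof (cases "\<epsilon> = 0")
    case True thus ?thesis unfolding min_inv_def n_def by simp
  next
    case False
    hence ep: "\<epsilon> > 0" using e0 by simp
    have "\<epsilon> < 1 / sqrt (real n)" using br unfolding n_def by simp
    hence "\<epsilon> * sqrt (real n) < 1" using sq by (simp add: field_simps)
    hence "sqrt (real n) < 1 / \<epsilon>" using ep by (simp add: field_simps)
    thus ?thesis unfolding min_inv_def n_def using False by simp
  qed
  let ?R1 = "{i. \<exists>v\<in>V - I rs. fst s2 v = Some i}"
  let ?R2 = "\<Union>v\<in>I rs. {emin v}"
  have ranS: "ran \<chi> \<subseteq> ?R1 \<union> ?R2" unfolding \<chi>_def ran_def by (auto split: if_splits)
  have c2: "acost es ?R2 \<le> sqrt (real n) * cover_cost es OPT"
  proof -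
    have "acost es ?R2 \<le> (\<Sum>v\<in>I rs. acost es {emin v})" using finI by (rule U.acost_UN_le)
    also have "\<dots> \<le> real (card (I rs)) * cover_cost es OPT"
    proof (rule sum_bounded_above)
      fix v assume "v \<in> I rs"
      hence vV: "v \<in> V" using IV by auto
      then obtain e where e: "e \<in> set es" "eid_of e = emin v" "v \<in> verts_of e"
        and emn: "\<forall>e'\<in>set es. v \<in> verts_of e' \<longrightarrow> cost_of e \<le> cost_of e'"
        using em unfolding emin_ok_def by blast
      have OPTs: "OPT \<subseteq> {..<length es}" and covO: "(\<Union>t\<in>OPT. verts_of (es ! t)) = V"
        using ec unfolding edge_cover_def by auto
      obtain t where t: "t \<in> OPT" "v \<in> verts_of (es ! t)" using covO vV by blast
      have tl: "t < length es" using t OPTs by auto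
      have "acost es {emin v} \<le> cost_of e" using U.acost_single[OF e(1)] e(2) by simp
      also have "\<dots> \<le> cost_of (es ! t)" using emn t tl by simp
      also have "\<dots> \<le> cover_cost es OPT" unfolding cover_cost_def
        using t(1) OPTs U.cnn finite_subset[OF OPTs] by (intro member_le_sum) auto
      finally show "acost es {emin v} \<le> cover_cost es OPT" .
    qed
    also have "\<dots> \<le> sqrt (real n) * cover_cost es OPT" using hAB cc by (intro mult_right_mono) auto
    finally show ?thesis .
  qed
  have c1: "acost es ?R1 \<le> 4 * sqrt (real n) * cover_cost es OPT"
  proof (cases "V - I rs = {}")
    case True
    hence "?R1 = {}" by auto
    hence "acost es ?R1 = 0" unfolding acost_def by simp
    thus ?thesis using cc sq by simp
  next
    case False
    let ?D = "V - I rs"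
    let ?F = "(\<lambda>v. the (snd s2 v)) ` ?D"
    define m where "m = Min ?F"
    have fF: "finite ?F" "?F \<noteq> {}" using finV False by auto
    have mle: "m \<le> the (snd s2 v)" if "v \<in> ?D" for v unfolding m_def using fF that by (intro Min_le) auto
    obtain v0 where v0: "v0 \<in> ?D" "the (snd s2 v0) = m" unfolding m_def using Min_in[OF fF] by auto
    have "rs < the (snd s2 v0)" using v0 asg[of v0] unfolding I_def eff_le_def by (metis (no_types, lifting) DiffE mem_Collect_eq not_le option.simps(5))
    hence mrs: "rs < m" using v0 by simp
    have v0m: "v0 \<in> I m" using v0 asg[of v0] unfolding I_def eff_le_def by (metis (no_types, lifting) DiffE mem_Collect_eq option.simps(5) order_refl)
    have "?R1 \<subseteq> imgset V s2 (m - 1)"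
    proof
      fix i assume "i \<in> ?R1"
      then obtain v where v: "v \<in> ?D" "fst s2 v = Some i" by auto
      have "snd s2 v = Some (the (snd s2 v))" "m - 1 < the (snd s2 v)" using asg[of v] v mle[of v] by auto
      thus "i \<in> imgset V s2 (m - 1)" unfolding imgset_def using v by blast
    qed
    hence "acost es ?R1 \<le> acost es (imgset V s2 (m - 1))" by (rule U.acost_mono)
    also have "\<dots> \<le> 2 powr (1 - real_of_int (m - 1)) * sum (\<lambda>_. 1) V" using inv by (rule U.img_bound)
    also have "\<dots> = 4 / 2 powr (real_of_int m) * (sqrt (real n) * sqrt (real n))"
      unfolding two_powr_m1 by (simp add: n_def)
    also have "\<dots> \<le> 4 * sqrt (real n) * cover_cost es OPT"
    proof (rule arith2)
      have "sqrt (real n) \<le> real (card (I m))" using hAB mrs v0m by blast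
      also have "\<dots> = sum (\<lambda>_. 1) (I m)" by simp
      also have "\<dots> \<le> 2 powr (real_of_int m) * cover_cost es OPT" unfolding I_def using inv ec by (rule U.key)
      finally show "sqrt (real n) \<le> 2 powr (real_of_int m) * cover_cost es OPT" .
    qed (use sq in auto)
    finally show ?thesis .
  qed
  have "acost es (ran \<chi>) \<le> acost es (?R1 \<union> ?R2)" using ranS by (rule U.acost_mono)
  also have "\<dots> \<le> acost es ?R1 + acost es ?R2" by (rule U.acost_Un)
  also have "\<dots> \<le> 5 * sqrt (real n) * cover_cost es OPT" using c1 c2 by simp
  finally show ?thesis unfolding out mi using cert ic by simp
qed


theorem theorem12:
  shows "\<exists>C::real. C > 0 \<and>
    (\<forall>(V::nat set) (b::nat \<Rightarrow> real) (es::stream) (OPT::nat set)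
        (s1::cover_state) (s2::cover_state) (emin::nat \<Rightarrow> nat) (\<epsilon>::real).
       weighted_hypergraph V b es \<longrightarrow>
       every_vertex_covered V es \<longrightarrow>
       min_edge_cover V es OPT \<longrightarrow>
       0 \<le> \<epsilon> \<longrightarrow> \<epsilon> < 1 \<longrightarrow>
       cover_run b es cover_init s1 \<longrightarrow>
       cover_run (\<lambda>_. 1) es cover_init s2 \<longrightarrow>
       emin_ok V es emin \<longrightarrow>
       cover_certificate V b es (1 - \<epsilon>) (sssc_output V b s1 s2 emin \<epsilon>) \<and>
       image_cost es (sssc_output V b s1 s2 emin \<epsilon>)
         \<le> C * min_inv \<epsilon> (sqrt (real (card V))) * cover_cost es OPT)"
proof (rule exI[of _ 5], rule conjI)
  show "(5::real) > 0" by simp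
next
  show "\<forall>(V::nat set) (b::nat \<Rightarrow> real) (es::stream) (OPT::nat set)
        (s1::cover_state) (s2::cover_state) (emin::nat \<Rightarrow> nat) (\<epsilon>::real).
       weighted_hypergraph V b es \<longrightarrow>
       every_vertex_covered V es \<longrightarrow>
       min_edge_cover V es OPT \<longrightarrow>
       0 \<le> \<epsilon> \<longrightarrow> \<epsilon> < 1 \<longrightarrow>
       cover_run b es cover_init s1 \<longrightarrow>
       cover_run (\<lambda>_. 1) es cover_init s2 \<longrightarrow>
       emin_ok V es emin \<longrightarrow>
       cover_certificate V b es (1 - \<epsilon>) (sssc_output V b s1 s2 emin \<epsilon>) \<and>
       image_cost es (sssc_output V b s1 s2 emin \<epsilon>)
         \<le> 5 * min_inv \<epsilon> (sqrt (real (card V))) * cover_cost es OPT"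
  proof (intro allI impI)
  fix V b es OPT s1 s2 emin and \<epsilon> :: real
  assume wh: "weighted_hypergraph V b es" and cov: "every_vertex_covered V es"
    and moc: "min_edge_cover V es OPT" and e0: "0 \<le> \<epsilon>" and e1: "\<epsilon> < 1"
    and r1: "cover_run b es cover_init s1" and r2: "cover_run (\<lambda>_. 1) es cover_init s2"
    and em: "emin_ok V es emin"
  have S1: "sset V b es" using wh unfolding weighted_hypergraph_def sset_def by auto
  have S2: "sset V (\<lambda>_. 1) es" using wh unfolding weighted_hypergraph_def sset_def by auto
  have inv1: "cinv V b es es s1" using sset.final_inv[OF S1 r1] .
  have inv2: "cinv V (\<lambda>_. 1) es es s2" using sset.final_inv[OF S2 r2] .
  have ec: "edge_cover V es OPT" using moc unfolding min_edge_cover_def by auto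
  show "cover_certificate V b es (1 - \<epsilon>) (sssc_output V b s1 s2 emin \<epsilon>) \<and>
       image_cost es (sssc_output V b s1 s2 emin \<epsilon>)
         \<le> 5 * min_inv \<epsilon> (sqrt (real (card V))) * cover_cost es OPT"
  proof (cases "1 / sqrt (real (card V)) \<le> \<epsilon>")
    case True
    show ?thesis by (rule sset.branch1[OF S1 inv1 cov ec e0 e1 True])
  next
    case False
    show ?thesis by (rule branch2[OF S1 S2 inv2 cov ec e0 e1 False em])
  qed
  qed
qed

end
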